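(* Let $1 \leq k \leq n$ and $x \in [0,1]^n$. Then for every subset $W \subseteq \{1, \ldots, n\}$ with $|W| \geq k$, $$Q_k(x) \geq \frac{1}{|W| - k + 1}\left(\sum_{i \in W} x_i - k + 1\right).$$
   Context: For $x \in \mathbb{R}^n$ and an integer $1 \leq k \leq n$, $Q_k(x)$ denotes the $k$-th largest entry of $x$ (entries counted with multiplicity). *)

theory Defs
  imports Complex_Main
begin

definition kth_largest :: "nat \<Rightarrow> (nat \<Rightarrow> real) \<Rightarrow> nat \<Rightarrow> real" where
  "kth_largest n x k = rev (sort (map x [1..<n+1])) ! (k - 1)"

end

theory Submission
  imports Defs "HOL-Library.Multiset"
begin

lemma count_gt:
  fixes x :: "nat \<Rightarrow> real"
  assumes "1 \<le> k" "k \<le> n"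
  shows "card {i\<in>{1..n}. x i > kth_largest n x k} \<le> k - 1"
proof -
  define q where "q = kth_largest n x k"
  define xs where "xs = map x [1..<n+1]"
  define L where "L = rev (sort xs)"
  have q: "q = L ! (k-1)" unfolding q_def L_def xs_def kth_largest_def by simp
  have lenL: "length L = n" unfolding L_def xs_def by simp
  have "length (filter (\<lambda>v. v > q) xs) = length (filter ((\<lambda>v. v > q) \<circ> x) [1..<n+1])"
    unfolding xs_def by (simp add: filter_map)
  also have "\<dots> = card (set (filter ((\<lambda>v. v > q) \<circ> x) [1..<n+1]))"
    by (rule distinct_card[symmetric]) simp
  also have "set (filter ((\<lambda>v. v > q) \<circ> x) [1..<n+1]) = {i\<in>{1..n}. x i > q}" by auto
  finally have e1: "length (filter (\<lambda>v. v > q) xs) = card {i\<in>{1..n}. x i > q}" .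
  have "mset L = mset xs" unfolding L_def by simp
  hence e2: "length (filter (\<lambda>v. v > q) L) = length (filter (\<lambda>v. v > q) xs)"
    by (metis mset_filter size_mset)
  have srt: "sorted (sort xs)" by simp
  have mono: "L ! j \<le> L ! i" if "i \<le> j" "j < n" for i j
  proof -
    have ls: "length (sort xs) = n" unfolding xs_def by simp
    have "L ! j = sort xs ! (n - 1 - j)" "L ! i = sort xs ! (n - 1 - i)"
      using that ls unfolding L_def by (auto simp: rev_nth)
    thus ?thesis using sorted_nth_mono[OF srt, of "n-1-j" "n-1-i"] that ls by auto
  qed
  have "length (filter (\<lambda>v. v > q) L) = card {j. j < length L \<and> L ! j > q}"
    by (rule length_filter_conv_card)
  also have "\<dots> \<le> card {..<k-1}"
  proof (rule card_mono)
    show "{j. j < length L \<and> q < L ! j} \<subseteq> {..<k - 1}"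
    proof
      fix j assume "j \<in> {j. j < length L \<and> q < L ! j}"
      hence "j < n" "q < L ! j" using lenL by auto
      moreover have "j \<ge> k - 1 \<Longrightarrow> L ! j \<le> q" using mono[of "k-1" j] q \<open>j<n\<close> by auto
      ultimately show "j \<in> {..<k-1}" by fastforce
    qed
  qed simp
  finally show ?thesis using e1 e2 unfolding q_def by simp
qed

lemma q_le1:
  fixes x :: "nat \<Rightarrow> real"
  assumes "1 \<le> k" "k \<le> n" "\<forall>i\<in>{1..n}. 0 \<le> x i \<and> x i \<le> 1"
  shows "kth_largest n x k \<le> 1"
proof -
  have "kth_largest n x k \<in> set (rev (sort (map x [1..<n+1])))"
    unfolding kth_largest_def using assms by (intro nth_mem) simp
  hence "kth_largest n x k \<in> x ` {1..n}" by auto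
  thus ?thesis using assms(3) by auto
qed

theorem theorem3:
  fixes n k :: nat and x :: "nat \<Rightarrow> real" and W :: "nat set"
  assumes "1 \<le> k" and "k \<le> n"
    and "\<forall>i\<in>{1..n}. 0 \<le> x i \<and> x i \<le> 1"
    and "W \<subseteq> {1..n}" and "card W \<ge> k"
  shows "kth_largest n x k \<ge> ((\<Sum>i\<in>W. x i) - real k + 1) / (real (card W) - real k + 1)"
proof -
  define q where "q = kth_largest n x k"
  define A where "A = {i\<in>W. x i > q}"
  have finW: "finite W" using assms(4) finite_subset by blast
  have AW: "A \<subseteq> W" unfolding A_def by auto
  have finA: "finite A" using AW finW finite_subset by blast
  have cA: "card A \<le> k - 1"
  proof -
    have "A \<subseteq> {i\<in>{1..n}. x i > q}" using assms(4) unfolding A_def by auto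
    hence "card A \<le> card {i\<in>{1..n}. x i > q}" by (intro card_mono) auto
    thus ?thesis using count_gt[OF assms(1,2), of x] unfolding q_def by simp
  qed
  have q1: "q \<le> 1" using q_le1[OF assms(1-3)] unfolding q_def .
  have sA: "(\<Sum>i\<in>A. x i) \<le> real (card A)"
  proof -
    have "(\<Sum>i\<in>A. x i) \<le> (\<Sum>i\<in>A. 1)"
      using AW assms(3,4) by (intro sum_mono) auto
    thus ?thesis by simp
  qed
  have sB: "(\<Sum>i\<in>W - A. x i) \<le> real (card (W - A)) * q"
  proof -
    have "(\<Sum>i\<in>W - A. x i) \<le> (\<Sum>i\<in>W - A. q)"
      unfolding A_def by (intro sum_mono) auto
    thus ?thesis by simp
  qed
  have cWA: "real (card (W - A)) = real (card W) - real (card A)"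
    using card_Diff_subset[OF finA AW] card_mono[OF finW AW] by simp
  have split: "(\<Sum>i\<in>W. x i) = (\<Sum>i\<in>A. x i) + (\<Sum>i\<in>W - A. x i)"
    using sum.subset_diff[OF AW finW] by (simp add: add.commute)
  have cAr: "real (card A) \<le> real k - 1" using cA assms(1) by linarith
  have "(\<Sum>i\<in>W. x i) \<le> real (card A) + (real (card W) - real (card A)) * q"
    using split sA sB unfolding cWA[symmetric] by linarith
  also have "\<dots> = real (card W) * q + real (card A) * (1 - q)" by algebra
  also have "\<dots> \<le> real (card W) * q + (real k - 1) * (1 - q)"
    using cAr q1 by (intro add_left_mono mult_right_mono) auto
  finally have S: "(\<Sum>i\<in>W. x i) - real k + 1 \<le> q * (real (card W) - real k + 1)"
    by (simp add: algebra_simps)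
  have pos: "real (card W) - real k + 1 > 0" using assms(5) by linarith
  show ?thesis unfolding q_def[symmetric] using S pos by (simp add: divide_le_eq)
qed

end
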